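(* For all $0<q<1$, all integers $n\ge 1$ and $1\le i\le n$, and all $t\ge 1$, if $\pi\sim\mu_{n,q}$ then $$\mathbb{P}(|\pi(i)-i|\ge t)\le 2q^t,$$ and $$c\min\left(\frac{q}{1-q},\,n-1\right)\le \mathbb{E}|\pi(i)-i|\le \min\left(\frac{2q}{1-q},\,n-1\right)$$ for some absolute constant $c>0$. In addition, if $n\ge 3$ and $1\le t\le \frac{n+5}{8}$ then $$\mathbb{P}(|\pi(i)-i|\ge t)\ge \tfrac12 q^{2t-1}.$$
   Context: For $q>0$ and an integer $n\ge1$, the Mallows measure $\mu_{n,q}$ on the symmetric group $S_n$ is defined by $\mu_{n,q}(\pi)=q^{\mathrm{inv}(\pi)}/Z_{n,q}$, where $\mathrm{inv}(\pi)=|\{(i,j): i<j,\ \pi(i)>\pi(j)\}|$ is the number of inversions of $\pi$ and $Z_{n,q}$ is the normalizing constant. *)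

theory Defs
  imports Complex_Main "HOL-Combinatorics.Permutations"
begin

definition inversions :: "nat \<Rightarrow> (nat \<Rightarrow> nat) \<Rightarrow> nat" where
  "inversions n \<pi> = card {(i, j). i \<in> {1..n} \<and> j \<in> {1..n} \<and> i < j \<and> \<pi> i > \<pi> j}"

definition mallows_Z :: "nat \<Rightarrow> real \<Rightarrow> real" where
  "mallows_Z n q = (\<Sum>\<pi> \<in> {\<pi>. \<pi> permutes {1..n}}. q ^ inversions n \<pi>)"

definition mallows :: "nat \<Rightarrow> real \<Rightarrow> (nat \<Rightarrow> nat) \<Rightarrow> real" where
  "mallows n q \<pi> = q ^ inversions n \<pi> / mallows_Z n q"

definition mallows_prob :: "nat \<Rightarrow> real \<Rightarrow> ((nat \<Rightarrow> nat) \<Rightarrow> bool) \<Rightarrow> real" where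
  "mallows_prob n q E = (\<Sum>\<pi> \<in> {\<pi>. \<pi> permutes {1..n} \<and> E \<pi>}. mallows n q \<pi>)"

definition mallows_expect :: "nat \<Rightarrow> real \<Rightarrow> ((nat \<Rightarrow> nat) \<Rightarrow> real) \<Rightarrow> real" where
  "mallows_expect n q X = (\<Sum>\<pi> \<in> {\<pi>. \<pi> permutes {1..n}}. mallows n q \<pi> * X \<pi>)"

end

theory Submission
  imports Defs
begin

definition Inv :: "nat \<Rightarrow> (nat\<Rightarrow>nat) \<Rightarrow> (nat\<times>nat) set" where
 "Inv n \<pi> = {(a, b). a \<in> {1..n} \<and> b \<in> {1..n} \<and> a < b \<and> \<pi> a > \<pi> b}"

lemma inversions_Inv: "inversions n \<pi> = card (Inv n \<pi>)"
  by (simp add: inversions_def Inv_def)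

lemma finite_Inv[simp]: "finite (Inv n \<pi>)"
  by (rule finite_subset[of _ "{1..n}\<times>{1..n}"]) (auto simp: Inv_def)

lemma perm_in: "\<pi> permutes {1..n} \<Longrightarrow> a \<in> {1..n} \<Longrightarrow> \<pi> a \<in> {1..n}"
  by (metis permutes_in_image)

lemma perm_inj: "\<pi> permutes {1..n} \<Longrightarrow> \<pi> a = \<pi> b \<Longrightarrow> a = b"
  by (meson injD permutes_inj)

lemma swap_inv:
  assumes p: "\<pi> permutes {1..n}" and ij: "i < j" "i \<in> {1..n}" "j \<in> {1..n}" and lt: "\<pi> j < \<pi> i"
  shows "inversions n (\<pi> \<circ> transpose i j) + 1 \<le> inversions n \<pi>"
proof -
  let ?t = "transpose i j"
  let ?p = "\<pi> \<circ> ?t"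
  define g where "g = (\<lambda>(a::nat,b::nat). if ?t a < ?t b then (?t a, ?t b) else (a,b))"
  have tt: "?t (?t x) = x" for x by simp
  have "inj_on g (Inv n ?p)"
  proof (rule inj_onI)
    fix x y assume x: "x \<in> Inv n ?p" and y: "y \<in> Inv n ?p" and e: "g x = g y"
    obtain a b where xab: "x = (a,b)" by (cases x)
    obtain c d where ycd: "y = (c,d)" by (cases y)
    have ab: "a < b" "c < d" using x y xab ycd by (auto simp: Inv_def)
    show "x = y"
    proof (cases "?t a < ?t b")
      case True
      show ?thesis
      proof (cases "?t c < ?t d")
        case True
        then show ?thesis using \<open>?t a < ?t b\<close> e xab ycd by (simp add: g_def) (metis tt)
      next
        case False
        then have "?t a = c" "?t b = d" using \<open>?t a < ?t b\<close> e xab ycd by (auto simp: g_def)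
        then have "a = ?t c" "b = ?t d" by auto
        then show ?thesis using False ab by auto
      qed
    next
      case False
      show ?thesis
      proof (cases "?t c < ?t d")
        case True
        then have "?t c = a" "?t d = b" using False e xab ycd by (auto simp: g_def)
        then have "c = ?t a" "d = ?t b" by auto
        then show ?thesis using False ab by auto
      next
        case False2: False
        then show ?thesis using False e xab ycd by (auto simp: g_def)
      qed
    qed
  qed
  moreover have "g ` Inv n ?p \<subseteq> Inv n \<pi> - {(i,j)}"
  proof
    fix z assume "z \<in> g ` Inv n ?p"
    then obtain a b where ab: "(a,b) \<in> Inv n ?p" "z = g (a,b)" by auto
    then have a: "a \<in> {1..n}" "b \<in> {1..n}" "a < b" "\<pi> (?t a) > \<pi> (?t b)" by (auto simp: Inv_def)
    show "z \<in> Inv n \<pi> - {(i,j)}"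
      using a ab(2) ij lt unfolding g_def Inv_def
      by (auto simp: transpose_def split: if_splits)
  qed
  ultimately have "card (Inv n ?p) \<le> card (Inv n \<pi> - {(i,j)})"
    by (intro card_inj_on_le) auto
  moreover have "(i,j) \<in> Inv n \<pi>" using ij lt by (auto simp: Inv_def)
  moreover have "card (Inv n \<pi> - {(i,j)}) = card (Inv n \<pi>) - 1"
    using \<open>(i,j) \<in> Inv n \<pi>\<close> by (simp add: card_Diff_singleton)
  moreover have "card (Inv n \<pi>) \<ge> 1"
    using \<open>(i,j) \<in> Inv n \<pi>\<close> by (metis One_nat_def Suc_leI card_gt_0_iff empty_iff finite_Inv)
  ultimately show ?thesis unfolding inversions_Inv by linarith
qed

definition cnt :: "nat \<Rightarrow> nat \<Rightarrow> (nat\<Rightarrow>nat) \<Rightarrow> nat" where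
  "cnt n i \<pi> = card {j. i < j \<and> j \<le> n \<and> \<pi> j < \<pi> i}"

lemma up_le_cnt:
  assumes p: "\<pi> permutes {1..n}" and i: "i \<in> {1..n}"
  shows "\<pi> i \<le> i + cnt n i \<pi>"
proof -
  let ?A = "{k\<in>{1..n}. \<pi> k < \<pi> i}"
  have img: "\<pi> ` ?A = {1..<\<pi> i}"
  proof
    show "\<pi> ` ?A \<subseteq> {1..<\<pi> i}" using perm_in[OF p] by fastforce
    show "{1..<\<pi> i} \<subseteq> \<pi> ` ?A"
    proof
      fix v assume v: "v \<in> {1..<\<pi> i}"
      then have "v \<in> {1..n}" using perm_in[OF p i] by auto
      then obtain k where "k \<in> {1..n}" "v = \<pi> k" using permutes_image[OF p] by blast
      then show "v \<in> \<pi> ` ?A" using v by auto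
    qed
  qed
  have cA: "card ?A = \<pi> i - 1"
    using card_image[OF permutes_inj_on[OF p], of ?A] img by simp
  have "?A \<subseteq> {1..<i} \<union> {j. i < j \<and> j \<le> n \<and> \<pi> j < \<pi> i}"
    by auto (metis linorder_neqE_nat less_irrefl)
  moreover have fC: "finite {j. i < j \<and> j \<le> n \<and> \<pi> j < \<pi> i}"
    by (rule finite_subset[of _ "{..n}"]) auto
  ultimately have "card ?A \<le> card ({1..<i} \<union> {j. i < j \<and> j \<le> n \<and> \<pi> j < \<pi> i})"
    by (intro card_mono) auto
  also have "\<dots> \<le> card {1..<i} + cnt n i \<pi>"
    unfolding cnt_def by (rule card_Un_le)
  finally have "card ?A \<le> card {1..<i} + cnt n i \<pi>" .
  moreover have "\<pi> i \<ge> 1" "i \<ge> 1" using perm_in[OF p i] i by auto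
  ultimately show ?thesis using cA by simp
qed

definition jD :: "nat \<Rightarrow> nat \<Rightarrow> (nat\<Rightarrow>nat) \<Rightarrow> nat" where
  "jD n i \<pi> = (SOME j. (i < j \<and> j \<le> n \<and> \<pi> j < \<pi> i) \<and>
       (\<forall>k. i < k \<and> k \<le> n \<and> \<pi> k < \<pi> i \<longrightarrow> \<pi> k \<le> \<pi> j))"

definition D :: "nat \<Rightarrow> nat \<Rightarrow> (nat\<Rightarrow>nat) \<Rightarrow> (nat\<Rightarrow>nat)" where
  "D n i \<pi> = \<pi> \<circ> transpose i (jD n i \<pi>)"

lemma jD:
  assumes "cnt n i \<pi> \<ge> 1"
  shows "i < jD n i \<pi>" "jD n i \<pi> \<le> n" "\<pi> (jD n i \<pi>) < \<pi> i"
    "\<And>k. i < k \<Longrightarrow> k \<le> n \<Longrightarrow> \<pi> k < \<pi> i \<Longrightarrow> \<pi> k \<le> \<pi> (jD n i \<pi>)"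
proof -
  let ?S = "{j. i < j \<and> j \<le> n \<and> \<pi> j < \<pi> i}"
  have fin: "finite ?S" by (rule finite_subset[of _ "{..n}"]) auto
  have ne: "?S \<noteq> {}" using assms unfolding cnt_def by (metis card.empty not_one_le_zero)
  have "Max (\<pi> ` ?S) \<in> \<pi> ` ?S" using fin ne by (intro Max_in) auto
  then obtain j where j: "j \<in> ?S" "\<pi> j = Max (\<pi> ` ?S)" by auto
  have "\<exists>j. (i < j \<and> j \<le> n \<and> \<pi> j < \<pi> i) \<and>
       (\<forall>k. i < k \<and> k \<le> n \<and> \<pi> k < \<pi> i \<longrightarrow> \<pi> k \<le> \<pi> j)"
    using j fin by (intro exI[of _ j]) auto
  from someI_ex[OF this] show "i < jD n i \<pi>" "jD n i \<pi> \<le> n" "\<pi> (jD n i \<pi>) < \<pi> i"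
    "\<And>k. i < k \<Longrightarrow> k \<le> n \<Longrightarrow> \<pi> k < \<pi> i \<Longrightarrow> \<pi> k \<le> \<pi> (jD n i \<pi>)"
    unfolding jD_def by blast+
qed

lemma D_apply: "D n i \<pi> k = (if k = i then \<pi> (jD n i \<pi>) else if k = jD n i \<pi> then \<pi> i else \<pi> k)"
  unfolding D_def by (simp add: transpose_def)

lemma D_perm:
  assumes p: "\<pi> permutes {1..n}" and i: "i \<in> {1..n}" and c: "cnt n i \<pi> \<ge> 1"
  shows "D n i \<pi> permutes {1..n}"
proof -
  have "jD n i \<pi> \<in> {1..n}" using jD(1,2)[OF c] i by auto
  then show ?thesis unfolding D_def using i
    by (intro permutes_compose[OF _ p] permutes_swap_id)
qed

lemma D_inv:
  assumes p: "\<pi> permutes {1..n}" and i: "i \<in> {1..n}" and c: "cnt n i \<pi> \<ge> 1"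
  shows "inversions n (D n i \<pi>) + 1 \<le> inversions n \<pi>"
proof -
  have "jD n i \<pi> \<in> {1..n}" using jD(1,2)[OF c] i by auto
  then show ?thesis unfolding D_def using i jD(1,3)[OF c]
    by (intro swap_inv[OF p])
qed

lemma D_cnt:
  assumes p: "\<pi> permutes {1..n}" and i: "i \<in> {1..n}" and c: "cnt n i \<pi> \<ge> 1"
  shows "cnt n i (D n i \<pi>) + 1 = cnt n i \<pi>"
proof -
  let ?j = "jD n i \<pi>"
  note J = jD[OF c]
  have ne: "?j \<noteq> i" using J by auto
  let ?B = "{k. i < k \<and> k \<le> n \<and> \<pi> k < \<pi> ?j}"
  have e1: "{k. i < k \<and> k \<le> n \<and> D n i \<pi> k < D n i \<pi> i} = ?B"
  proof -
    have "D n i \<pi> k < D n i \<pi> i \<longleftrightarrow> \<pi> k < \<pi> ?j" if "i < k" for k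
      using that ne J(3) unfolding D_apply by auto
    then show ?thesis by blast
  qed
  have e2: "{k. i < k \<and> k \<le> n \<and> \<pi> k < \<pi> i} = insert ?j ?B"
  proof -
    have "k = ?j" if "i < k" "k \<le> n" "\<pi> k < \<pi> i" "\<not> \<pi> k < \<pi> ?j" for k
      using J(4)[OF that(1-3)] that(4) perm_inj[OF p] by (metis le_neq_implies_less)
    then show ?thesis using J by auto
  qed
  have fin: "finite ?B" by (rule finite_subset[of _ "{..n}"]) auto
  show ?thesis unfolding cnt_def e1 e2 using fin by simp
qed

lemma D_inj:
  assumes p1: "\<pi>1 permutes {1..n}" and p2: "\<pi>2 permutes {1..n}" and i: "i \<in> {1..n}"
    and c1: "cnt n i \<pi>1 \<ge> 1" and c2: "cnt n i \<pi>2 \<ge> 1" and e: "D n i \<pi>1 = D n i \<pi>2"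
  shows "\<pi>1 = \<pi>2"
proof -
  have key: "\<forall>k. i < k \<and> k \<le> n \<and> D n i \<pi> k > D n i \<pi> i \<longrightarrow> D n i \<pi> (jD n i \<pi>) \<le> D n i \<pi> k"
    "i < jD n i \<pi> \<and> jD n i \<pi> \<le> n \<and> D n i \<pi> (jD n i \<pi>) > D n i \<pi> i"
    if p: "\<pi> permutes {1..n}" and c: "cnt n i \<pi> \<ge> 1" for \<pi>
  proof -
    note J = jD[OF c]
    have ne: "jD n i \<pi> \<noteq> i" using J by auto
    show "i < jD n i \<pi> \<and> jD n i \<pi> \<le> n \<and> D n i \<pi> (jD n i \<pi>) > D n i \<pi> i"
      unfolding D_apply using J ne by auto
    show "\<forall>k. i < k \<and> k \<le> n \<and> D n i \<pi> k > D n i \<pi> i \<longrightarrow> D n i \<pi> (jD n i \<pi>) \<le> D n i \<pi> k"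
    proof (intro allI impI)
      fix k assume k: "i < k \<and> k \<le> n \<and> D n i \<pi> k > D n i \<pi> i"
      show "D n i \<pi> (jD n i \<pi>) \<le> D n i \<pi> k"
      proof (cases "k = jD n i \<pi>")
        case True then show ?thesis by simp
      next
        case False
        then have dk: "D n i \<pi> k = \<pi> k" "D n i \<pi> i = \<pi> (jD n i \<pi>)" "D n i \<pi> (jD n i \<pi>) = \<pi> i"
          unfolding D_apply using k ne by auto
        have "\<not> \<pi> k < \<pi> i" using J(4)[of k] k dk by auto
        then show ?thesis using dk by simp
      qed
    qed
  qed
  let ?p = "D n i \<pi>1"
  have pp: "?p permutes {1..n}" using D_perm[OF p1 i c1] .
  have "jD n i \<pi>1 = jD n i \<pi>2"
  proof -
    have a: "?p (jD n i \<pi>1) \<le> ?p (jD n i \<pi>2)" using key(1)[OF p1 c1] key(2)[OF p2 c2] e by auto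
    have b: "?p (jD n i \<pi>2) \<le> ?p (jD n i \<pi>1)" using key(2)[OF p1 c1] key(1)[OF p2 c2] e by auto
    from a b show ?thesis using perm_inj[OF pp] by (meson le_antisym)
  qed
  then have "?p \<circ> transpose i (jD n i \<pi>1) = D n i \<pi>2 \<circ> transpose i (jD n i \<pi>2)" using e by simp
  then show ?thesis unfolding D_def by (simp add: comp_assoc)
qed

definition W :: "nat \<Rightarrow> real \<Rightarrow> ((nat\<Rightarrow>nat)\<Rightarrow>bool) \<Rightarrow> real" where
  "W n q E = (\<Sum>\<pi>\<in>{\<pi>. \<pi> permutes {1..n} \<and> E \<pi>}. q ^ inversions n \<pi>)"

lemma finite_perms[simp]: "finite S \<Longrightarrow> finite {\<pi>. \<pi> permutes S \<and> E \<pi>}"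
  by (rule finite_subset[OF _ finite_permutations[of S]]) auto

lemma W_nonneg: "0 \<le> q \<Longrightarrow> 0 \<le> W n q E"
  unfolding W_def by (intro sum_nonneg) auto

lemma W_mono:
  assumes "0 \<le> q" "\<And>\<pi>. \<pi> permutes {1..n} \<Longrightarrow> E \<pi> \<Longrightarrow> F \<pi>"
  shows "W n q E \<le> W n q F"
  unfolding W_def using assms by (intro sum_mono2) auto

lemma W_cnt:
  assumes q: "0 < q" "q \<le> 1" and i: "i \<in> {1..n}"
  shows "W n q (\<lambda>\<pi>. t \<le> cnt n i \<pi>) \<le> q ^ t * W n q (\<lambda>_. True)"
proof (induction t)
  case 0
  then show ?case by (simp add: W_def)
next
  case (Suc t)
  let ?A = "{\<pi>. \<pi> permutes {1..n} \<and> Suc t \<le> cnt n i \<pi>}"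
  have "W n q (\<lambda>\<pi>. Suc t \<le> cnt n i \<pi>) = (\<Sum>\<pi>\<in>?A. q ^ inversions n \<pi>)" by (simp add: W_def)
  also have "\<dots> \<le> (\<Sum>\<pi>\<in>?A. q * q ^ inversions n (D n i \<pi>))"
  proof (intro sum_mono)
    fix \<pi> assume "\<pi> \<in> ?A"
    then have "inversions n (D n i \<pi>) + 1 \<le> inversions n \<pi>" using D_inv[OF _ i] by auto
    then have "q ^ inversions n \<pi> \<le> q ^ (inversions n (D n i \<pi>) + 1)"
      using q by (intro power_decreasing) auto
    then show "q ^ inversions n \<pi> \<le> q * q ^ inversions n (D n i \<pi>)" by simp
  qed
  also have "\<dots> = q * (\<Sum>\<pi>'\<in>D n i ` ?A. q ^ inversions n \<pi>')"
  proof -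
    have "inj_on (D n i) ?A" using D_inj[OF _ _ i] by (intro inj_onI) auto
    then show ?thesis by (simp add: sum.reindex sum_distrib_left)
  qed
  also have "\<dots> \<le> q * W n q (\<lambda>\<pi>. t \<le> cnt n i \<pi>)"
  proof -
    have "D n i ` ?A \<subseteq> {\<pi>. \<pi> permutes {1..n} \<and> t \<le> cnt n i \<pi>}"
    proof
      fix x assume "x \<in> D n i ` ?A"
      then obtain \<pi> where "\<pi> \<in> ?A" "x = D n i \<pi>" by blast
      moreover then have "cnt n i \<pi> \<ge> 1" "\<pi> permutes {1..n}" by auto
      ultimately show "x \<in> {\<pi>. \<pi> permutes {1..n} \<and> t \<le> cnt n i \<pi>}"
        using D_perm[OF _ i] D_cnt[OF _ i] by fastforce
    qed
    then have "(\<Sum>\<pi>'\<in>D n i ` ?A. q ^ inversions n \<pi>') \<le> W n q (\<lambda>\<pi>. t \<le> cnt n i \<pi>)"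
      unfolding W_def using q by (intro sum_mono2) auto
    then show ?thesis using q by (simp add: mult_left_mono)
  qed
  also have "\<dots> \<le> q * (q ^ t * W n q (\<lambda>_. True))" using Suc q by (simp add: mult_left_mono)
  finally show ?case by simp
qed

definition r :: "nat \<Rightarrow> nat \<Rightarrow> nat" where
  "r n k = (if k \<in> {1..n} then n + 1 - k else k)"

definition Rf :: "nat \<Rightarrow> (nat \<Rightarrow> nat) \<Rightarrow> (nat \<Rightarrow> nat)" where
  "Rf n \<pi> = r n \<circ> \<pi> \<circ> r n"

lemma rr[simp]: "r n (r n k) = k"
  by (auto simp: r_def)

lemma r_perm: "r n permutes {1..n}"
  unfolding permutes_def
proof (intro conjI allI impI)
  show "x \<notin> {1..n} \<Longrightarrow> r n x = x" for x unfolding r_def by auto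
  show "\<exists>!x. r n x = y" for y by (metis rr)
qed

lemma Rf_perm: "\<pi> permutes {1..n} \<Longrightarrow> Rf n \<pi> permutes {1..n}"
  unfolding Rf_def by (rule permutes_compose[OF r_perm permutes_compose[OF _ r_perm]])

lemma Rf_Rf[simp]: "Rf n (Rf n \<pi>) = \<pi>"
  by (rule ext) (simp add: Rf_def)

lemma Rf_apply:
  assumes p: "\<pi> permutes {1..n}" and k: "k \<in> {1..n}"
  shows "Rf n \<pi> k = n + 1 - \<pi> (n + 1 - k)"
proof -
  have "n + 1 - k \<in> {1..n}" using k by auto
  then have "\<pi> (n + 1 - k) \<in> {1..n}" using perm_in[OF p] by auto
  then show ?thesis using k by (simp add: Rf_def r_def)
qed

lemma Rf_inv:
  assumes p: "\<pi> permutes {1..n}"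
  shows "inversions n (Rf n \<pi>) = inversions n \<pi>"
proof -
  define h where "h = (\<lambda>(a::nat,b::nat). (n + 1 - b, n + 1 - a))"
  have inj: "inj_on h (Inv n \<pi>)"
    by (rule inj_onI) (auto simp: h_def Inv_def)
  have "h ` Inv n \<pi> = Inv n (Rf n \<pi>)"
  proof
    show "h ` Inv n \<pi> \<subseteq> Inv n (Rf n \<pi>)"
    proof
      fix z assume "z \<in> h ` Inv n \<pi>"
      then obtain a b where ab: "(a,b) \<in> Inv n \<pi>" "z = (n + 1 - b, n + 1 - a)"
        by (auto simp: h_def)
      then have a: "a \<in> {1..n}" "b \<in> {1..n}" "a < b" "\<pi> a > \<pi> b" by (auto simp: Inv_def)
      have "n+1-(n+1-b) = b" "n+1-(n+1-a) = a" "n+1-b \<in> {1..n}" "n+1-a \<in> {1..n}" using a by auto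
      then have "Rf n \<pi> (n+1-b) = n + 1 - \<pi> b" "Rf n \<pi> (n+1-a) = n + 1 - \<pi> a"
        using Rf_apply[OF p, of "n+1-b"] Rf_apply[OF p, of "n+1-a"] by auto
      moreover have "\<pi> a \<in> {1..n}" "\<pi> b \<in> {1..n}" using perm_in[OF p] a by auto
      ultimately show "z \<in> Inv n (Rf n \<pi>)" using a ab(2) by (auto simp: Inv_def)
    qed
    show "Inv n (Rf n \<pi>) \<subseteq> h ` Inv n \<pi>"
    proof
      fix z assume z: "z \<in> Inv n (Rf n \<pi>)"
      then obtain c d where cd: "z = (c,d)" "c \<in> {1..n}" "d \<in> {1..n}" "c < d"
        "Rf n \<pi> c > Rf n \<pi> d" by (auto simp: Inv_def)
      have e: "Rf n \<pi> c = n + 1 - \<pi> (n+1-c)" "Rf n \<pi> d = n + 1 - \<pi> (n+1-d)"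
        using Rf_apply[OF p] cd by auto
      have "n+1-c \<in> {1..n}" "n+1-d \<in> {1..n}" using cd by auto
      then have "\<pi> (n+1-c) \<in> {1..n}" "\<pi> (n+1-d) \<in> {1..n}" using perm_in[OF p] by auto
      moreover have "n+1-d < n+1-c" using cd by auto
      moreover have "\<pi> (n+1-d) > \<pi> (n+1-c)" using cd(5) e \<open>\<pi> (n+1-c) \<in> {1..n}\<close> \<open>\<pi> (n+1-d) \<in> {1..n}\<close>
        by simp arith
      ultimately have "(n+1-d, n+1-c) \<in> Inv n \<pi>" using \<open>n+1-c \<in> {1..n}\<close> \<open>n+1-d \<in> {1..n}\<close> unfolding Inv_def by blast
      moreover have "z = h (n+1-d, n+1-c)" using cd by (auto simp: h_def)
      ultimately show "z \<in> h ` Inv n \<pi>" by blast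
    qed
  qed
  then show ?thesis using card_image[OF inj] by (simp add: inversions_Inv)
qed

lemma W_Rf: "W n q E = W n q (\<lambda>\<pi>. E (Rf n \<pi>))"
  unfolding W_def
proof (rule sum.reindex_bij_witness[of _ "Rf n" "Rf n"])
  fix a assume a: "a \<in> {\<pi>. \<pi> permutes {1..n} \<and> E \<pi>}"
  then show "Rf n (Rf n a) = a" by simp
  show "Rf n a \<in> {\<pi>. \<pi> permutes {1..n} \<and> E (Rf n \<pi>)}" using a Rf_perm by auto
  show "q ^ inversions n (Rf n a) = q ^ inversions n a" using a Rf_inv by auto
next
  fix b assume b: "b \<in> {\<pi>. \<pi> permutes {1..n} \<and> E (Rf n \<pi>)}"
  then show "Rf n (Rf n b) = b" by simp
  show "Rf n b \<in> {\<pi>. \<pi> permutes {1..n} \<and> E \<pi>}" using b Rf_perm by auto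
qed

lemma W_up:
  assumes q: "0 < q" "q \<le> 1" and i: "i \<in> {1..n}"
  shows "W n q (\<lambda>\<pi>. i + t \<le> \<pi> i) \<le> q ^ t * W n q (\<lambda>_. True)"
proof -
  have "W n q (\<lambda>\<pi>. i + t \<le> \<pi> i) \<le> W n q (\<lambda>\<pi>. t \<le> cnt n i \<pi>)"
    using q up_le_cnt[OF _ i] by (intro W_mono) fastforce+
  also have "\<dots> \<le> q ^ t * W n q (\<lambda>_. True)" using W_cnt[OF q i] .
  finally show ?thesis .
qed

lemma W_dn:
  assumes q: "0 < q" "q \<le> 1" and i: "i \<in> {1..n}"
  shows "W n q (\<lambda>\<pi>. \<pi> i + t \<le> i) \<le> q ^ t * W n q (\<lambda>_. True)"
proof -
  let ?i = "n + 1 - i"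
  have i': "?i \<in> {1..n}" using i by auto
  have "W n q (\<lambda>\<pi>. \<pi> i + t \<le> i) = W n q (\<lambda>\<pi>. Rf n \<pi> i + t \<le> i)" by (rule W_Rf)
  also have "\<dots> \<le> W n q (\<lambda>\<pi>. ?i + t \<le> \<pi> ?i)"
  proof (rule W_mono)
    show "0 \<le> q" using q by simp
    fix \<pi> assume p: "\<pi> permutes {1..n}" and h: "Rf n \<pi> i + t \<le> i"
    have "\<pi> ?i \<in> {1..n}" using perm_in[OF p i'] .
    then show "?i + t \<le> \<pi> ?i" using h Rf_apply[OF p i] i by auto
  qed
  also have "\<dots> \<le> q ^ t * W n q (\<lambda>_. True)" by (rule W_up[OF q i'])
  finally show ?thesis .
qed

definition rho :: "nat \<Rightarrow> nat \<Rightarrow> nat \<Rightarrow> nat" where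
  "rho v k u = (if u = v then v + k else if v < u \<and> u \<le> v + k then u - 1 else u)"
definition sig :: "nat \<Rightarrow> nat \<Rightarrow> nat \<Rightarrow> nat" where
  "sig v k u = (if u = v + k then v else if v \<le> u \<and> u < v + k then u + 1 else u)"

lemma rs[simp]: "rho v k (sig v k u) = u"
  unfolding rho_def sig_def by auto
lemma sr[simp]: "sig v k (rho v k u) = u"
  unfolding rho_def sig_def by auto

lemma rho_perm: assumes "1 \<le> v" "v + k \<le> n" shows "rho v k permutes {1..n}"
  unfolding permutes_def
proof (intro conjI allI impI)
  show "x \<notin> {1..n} \<Longrightarrow> rho v k x = x" for x using assms unfolding rho_def by auto
  show "\<exists>!x. rho v k x = y" for y by (metis rs sr)
qed

lemma sig_perm: assumes "1 \<le> v" "v + k \<le> n" shows "sig v k permutes {1..n}"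
  unfolding permutes_def
proof (intro conjI allI impI)
  show "x \<notin> {1..n} \<Longrightarrow> sig v k x = x" for x using assms unfolding sig_def by auto
  show "\<exists>!x. sig v k x = y" for y by (metis rs sr)
qed

lemma rho_order:
  assumes "u1 \<noteq> u2" "(rho v k u1 < rho v k u2) \<noteq> (u1 < u2)"
  shows "(u1 = v \<and> v < u2 \<and> u2 \<le> v + k) \<or> (u2 = v \<and> v < u1 \<and> u1 \<le> v + k)"
  using assms unfolding rho_def by (auto split: if_splits)

lemma rho_inj: "rho v k a = rho v k b \<Longrightarrow> a = b"
  by (metis sr)

definition Fup :: "nat \<Rightarrow> nat \<Rightarrow> (nat \<Rightarrow> nat) \<Rightarrow> (nat \<Rightarrow> nat)" where
  "Fup i k \<pi> = rho (\<pi> i) k \<circ> \<pi>"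
definition Fdn :: "nat \<Rightarrow> nat \<Rightarrow> (nat \<Rightarrow> nat) \<Rightarrow> (nat \<Rightarrow> nat)" where
  "Fdn i k \<pi> = sig (\<pi> i - k) k \<circ> \<pi>"

lemma Fup_perm:
  assumes p: "\<pi> permutes {1..n}" and i: "i \<in> {1..n}" and b: "\<pi> i + k \<le> n"
  shows "Fup i k \<pi> permutes {1..n}"
  unfolding Fup_def using perm_in[OF p i] b by (intro permutes_compose[OF p] rho_perm) auto

lemma Fup_i: "Fup i k \<pi> i = \<pi> i + k"
  by (simp add: Fup_def rho_def)

lemma Fdn_perm:
  assumes p: "\<pi> permutes {1..n}" and i: "i \<in> {1..n}" and b: "k + 1 \<le> \<pi> i"
  shows "Fdn i k \<pi> permutes {1..n}"
  unfolding Fdn_def using perm_in[OF p i] b by (intro permutes_compose[OF p] sig_perm) auto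

lemma Fdn_i: "k \<le> \<pi> i \<Longrightarrow> Fdn i k \<pi> i = \<pi> i - k"
  by (simp add: Fdn_def sig_def)

lemma FupFdn: "k \<le> \<pi> i \<Longrightarrow> Fup i k (Fdn i k \<pi>) = \<pi>"
proof -
  assume a: "k \<le> \<pi> i"
  have "Fup i k (Fdn i k \<pi>) = rho (\<pi> i - k) k \<circ> (sig (\<pi> i - k) k \<circ> \<pi>)"
    unfolding Fup_def using Fdn_i[of k \<pi> i, OF a] by (simp add: Fdn_def)
  then show ?thesis by (simp add: o_def)
qed

lemma FdnFup: "Fdn i k (Fup i k \<pi>) = \<pi>"
proof -
  have "Fdn i k (Fup i k \<pi>) = sig (\<pi> i) k \<circ> (rho (\<pi> i) k \<circ> \<pi>)"
    unfolding Fdn_def using Fup_i[of i k \<pi>] by (simp add: Fup_def)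
  then show ?thesis by (simp add: o_def)
qed

lemma Fup_inv:
  assumes p: "\<pi> permutes {1..n}" and i: "i \<in> {1..n}"
  shows "inversions n (Fup i k \<pi>) \<le> inversions n \<pi> + k"
    "inversions n \<pi> \<le> inversions n (Fup i k \<pi>) + k"
proof -
  let ?v = "\<pi> i"
  let ?r = "rho ?v k"
  define B where "B = {b\<in>{1..n}. ?v < \<pi> b \<and> \<pi> b \<le> ?v + k}"
  have finB: "finite B" unfolding B_def by auto
  have "card B \<le> card {?v<..?v+k}"
  proof (rule card_inj_on_le)
    show "inj_on \<pi> B" by (rule permutes_inj_on[OF p])
    show "\<pi> ` B \<subseteq> {?v<..?v+k}" unfolding B_def by auto
  qed auto
  then have cB: "card B \<le> k" by simp
  have F: "Fup i k \<pi> = ?r \<circ> \<pi>" by (simp add: Fup_def)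
  have s1: "Inv n (?r \<circ> \<pi>) \<subseteq> Inv n \<pi> \<union> (\<lambda>b. (i,b)) ` B"
  proof
    fix z assume z: "z \<in> Inv n (?r \<circ> \<pi>)"
    then obtain a b where ab: "z = (a,b)" "a \<in> {1..n}" "b \<in> {1..n}" "a < b" "?r (\<pi> a) > ?r (\<pi> b)"
      by (auto simp: Inv_def)
    show "z \<in> Inv n \<pi> \<union> (\<lambda>b. (i,b)) ` B"
    proof (cases "\<pi> a > \<pi> b")
      case True then show ?thesis using ab by (auto simp: Inv_def)
    next
      case False
      have ne: "\<pi> a \<noteq> \<pi> b" using ab perm_inj[OF p] by auto
      then have lt: "\<pi> a < \<pi> b" using False by auto
      then have "(?r (\<pi> a) < ?r (\<pi> b)) \<noteq> (\<pi> a < \<pi> b)" using ab(5) by auto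
      from rho_order[OF ne this] lt have "\<pi> a = ?v" "?v < \<pi> b" "\<pi> b \<le> ?v + k" by auto
      then have "a = i" "b \<in> B" using perm_inj[OF p] ab unfolding B_def by auto
      then show ?thesis using ab by auto
    qed
  qed
  have s2: "Inv n \<pi> \<subseteq> Inv n (?r \<circ> \<pi>) \<union> (\<lambda>a. (a,i)) ` B"
  proof
    fix z assume z: "z \<in> Inv n \<pi>"
    then obtain a b where ab: "z = (a,b)" "a \<in> {1..n}" "b \<in> {1..n}" "a < b" "\<pi> a > \<pi> b"
      by (auto simp: Inv_def)
    show "z \<in> Inv n (?r \<circ> \<pi>) \<union> (\<lambda>a. (a,i)) ` B"
    proof (cases "?r (\<pi> a) > ?r (\<pi> b)")
      case True then show ?thesis using ab by (auto simp: Inv_def)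
    next
      case False
      have ne: "\<pi> a \<noteq> \<pi> b" using ab by auto
      then have "?r (\<pi> a) \<noteq> ?r (\<pi> b)" using rho_inj by metis
      then have "(?r (\<pi> a) < ?r (\<pi> b)) \<noteq> (\<pi> a < \<pi> b)" using ab(5) False by auto
      from rho_order[OF ne this] ab(5) have "\<pi> b = ?v" "?v < \<pi> a" "\<pi> a \<le> ?v + k" by auto
      then have "b = i" "a \<in> B" using perm_inj[OF p] ab unfolding B_def by auto
      then show ?thesis using ab by auto
    qed
  qed
  have "inversions n (Fup i k \<pi>) \<le> card (Inv n \<pi> \<union> (\<lambda>b. (i,b)) ` B)"
    unfolding F inversions_Inv using finB by (intro card_mono s1) auto
  also have "\<dots> \<le> inversions n \<pi> + card ((\<lambda>b. (i,b)) ` B)"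
    unfolding inversions_Inv by (rule card_Un_le)
  also have "card ((\<lambda>b. (i,b)) ` B) \<le> card B" by (rule card_image_le[OF finB])
  finally show "inversions n (Fup i k \<pi>) \<le> inversions n \<pi> + k" using cB by linarith
  have "inversions n \<pi> \<le> card (Inv n (?r \<circ> \<pi>) \<union> (\<lambda>a. (a,i)) ` B)"
    unfolding inversions_Inv using finB by (intro card_mono s2) auto
  also have "\<dots> \<le> inversions n (Fup i k \<pi>) + card ((\<lambda>a. (a,i)) ` B)"
    unfolding inversions_Inv F by (rule card_Un_le)
  also have "card ((\<lambda>a. (a,i)) ` B) \<le> card B" by (rule card_image_le[OF finB])
  finally show "inversions n \<pi> \<le> inversions n (Fup i k \<pi>) + k" using cB by linarith
qed

lemma W_alt: "W n q E = (\<Sum>\<pi>\<in>{\<pi>. \<pi> permutes {1..n}}. if E \<pi> then q ^ inversions n \<pi> else 0)"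
proof -
  have e: "{\<pi>. \<pi> permutes {1..n} \<and> E \<pi>} = {\<pi> \<in> {\<pi>. \<pi> permutes {1..n}}. E \<pi>}" by auto
  show ?thesis unfolding W_def e
    by (rule sum.inter_filter[OF finite_permutations[OF finite_atLeastAtMost]])
qed

lemma W_split: "W n q E = W n q (\<lambda>\<pi>. E \<pi> \<and> F \<pi>) + W n q (\<lambda>\<pi>. E \<pi> \<and> \<not> F \<pi>)"
  unfolding W_alt sum.distrib[symmetric] by (rule sum.cong) auto

lemma W_cong: "(\<And>\<pi>. \<pi> permutes {1..n} \<Longrightarrow> E \<pi> = F \<pi>) \<Longrightarrow> W n q E = W n q F"
  unfolding W_alt by (rule sum.cong) auto

lemma W_inj:
  assumes q: "0 < q" "q \<le> 1"
    and f: "\<And>\<pi>. \<pi> permutes {1..n} \<Longrightarrow> E \<pi> \<Longrightarrow> f \<pi> permutes {1..n} \<and> F (f \<pi>)"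
    and inj: "inj_on f {\<pi>. \<pi> permutes {1..n} \<and> E \<pi>}"
    and iv: "\<And>\<pi>. \<pi> permutes {1..n} \<Longrightarrow> E \<pi> \<Longrightarrow> inversions n (f \<pi>) \<le> inversions n \<pi> + k"
  shows "q ^ k * W n q E \<le> W n q F"
proof -
  let ?A = "{\<pi>. \<pi> permutes {1..n} \<and> E \<pi>}"
  have "q ^ k * W n q E = (\<Sum>\<pi>\<in>?A. q ^ (inversions n \<pi> + k))"
    unfolding W_def by (simp add: sum_distrib_left power_add mult.commute)
  also have "\<dots> \<le> (\<Sum>\<pi>\<in>?A. q ^ inversions n (f \<pi>))"
    using iv q by (intro sum_mono power_decreasing) auto
  also have "\<dots> = (\<Sum>\<pi>\<in>f ` ?A. q ^ inversions n \<pi>)"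
    using inj by (simp add: sum.reindex)
  also have "\<dots> \<le> W n q F"
    unfolding W_def using q f by (intro sum_mono2) auto
  finally show ?thesis .
qed

lemma W_low:
  assumes q: "0 < q" "q \<le> 1" and i: "i \<in> {1..n}" and t: "1 \<le> t" and nk: "2 * (2 * t - 1) \<le> n"
  shows "q ^ (2*t-1) * W n q (\<lambda>\<pi>. \<not> (i + t \<le> \<pi> i \<or> \<pi> i + t \<le> i))
    \<le> W n q (\<lambda>\<pi>. i + t \<le> \<pi> i \<or> \<pi> i + t \<le> i)"
proof -
  define k where "k = 2 * t - 1"
  have kk: "2 * k \<le> n" using nk k_def by simp
  let ?A = "\<lambda>\<pi>. i + t \<le> \<pi> i \<or> \<pi> i + t \<le> i"
  have up: "q ^ k * W n q (\<lambda>\<pi>. \<not> ?A \<pi> \<and> \<pi> i + k \<le> n) \<le> W n q (\<lambda>\<pi>. i + t \<le> \<pi> i)"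
  proof (rule W_inj[OF q, of _ _ "Fup i k"])
    fix \<pi> assume p: "\<pi> permutes {1..n}" and e: "\<not> ?A \<pi> \<and> \<pi> i + k \<le> n"
    show "Fup i k \<pi> permutes {1..n} \<and> i + t \<le> Fup i k \<pi> i"
      using Fup_perm[OF p i] e Fup_i[of i k \<pi>] t unfolding k_def by auto
    show "inversions n (Fup i k \<pi>) \<le> inversions n \<pi> + k" using Fup_inv(1)[OF p i] .
  next
    show "inj_on (Fup i k) {\<pi>. \<pi> permutes {1..n} \<and> \<not> ?A \<pi> \<and> \<pi> i + k \<le> n}"
      by (rule inj_onI) (metis FdnFup)
  qed
  have dn: "q ^ k * W n q (\<lambda>\<pi>. \<not> ?A \<pi> \<and> \<not> \<pi> i + k \<le> n) \<le> W n q (\<lambda>\<pi>. \<pi> i + t \<le> i)"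
  proof (rule W_inj[OF q, of _ _ "Fdn i k"])
    fix \<pi> assume p: "\<pi> permutes {1..n}" and e: "\<not> ?A \<pi> \<and> \<not> \<pi> i + k \<le> n"
    have ki: "k + 1 \<le> \<pi> i" using e nk unfolding k_def by auto
    have pd: "Fdn i k \<pi> permutes {1..n}" using Fdn_perm[OF p i ki] .
    show "Fdn i k \<pi> permutes {1..n} \<and> Fdn i k \<pi> i + t \<le> i"
      using pd e Fdn_i[of k \<pi> i] ki t unfolding k_def by auto
    have "inversions n (Fdn i k \<pi>) \<le> inversions n (Fup i k (Fdn i k \<pi>)) + k"
      using Fup_inv(2)[OF pd i] .
    then show "inversions n (Fdn i k \<pi>) \<le> inversions n \<pi> + k"
      using FupFdn[of k \<pi> i] ki by simp
  next
    show "inj_on (Fdn i k) {\<pi>. \<pi> permutes {1..n} \<and> \<not> ?A \<pi> \<and> \<not> \<pi> i + k \<le> n}"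
    proof (rule inj_onI)
      fix x y assume "x \<in> {\<pi>. \<pi> permutes {1..n} \<and> \<not> ?A \<pi> \<and> \<not> \<pi> i + k \<le> n}"
        "y \<in> {\<pi>. \<pi> permutes {1..n} \<and> \<not> ?A \<pi> \<and> \<not> \<pi> i + k \<le> n}" "Fdn i k x = Fdn i k y"
      moreover have "k \<le> x i" "k \<le> y i" using calculation(1,2) kk by auto
      ultimately show "x = y" using FupFdn[of k x i] FupFdn[of k y i] by metis
    qed
  qed
  have "W n q (\<lambda>\<pi>. \<not> ?A \<pi>) = W n q (\<lambda>\<pi>. \<not> ?A \<pi> \<and> \<pi> i + k \<le> n) + W n q (\<lambda>\<pi>. \<not> ?A \<pi> \<and> \<not> \<pi> i + k \<le> n)"
    by (rule W_split)
  moreover have "W n q ?A = W n q (\<lambda>\<pi>. i + t \<le> \<pi> i) + W n q (\<lambda>\<pi>. \<pi> i + t \<le> i)"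
  proof -
    have "W n q ?A = W n q (\<lambda>\<pi>. ?A \<pi> \<and> i + t \<le> \<pi> i) + W n q (\<lambda>\<pi>. ?A \<pi> \<and> \<not> i + t \<le> \<pi> i)"
      by (rule W_split)
    moreover have "W n q (\<lambda>\<pi>. ?A \<pi> \<and> i + t \<le> \<pi> i) = W n q (\<lambda>\<pi>. i + t \<le> \<pi> i)"
      by (rule W_cong) auto
    moreover have "W n q (\<lambda>\<pi>. ?A \<pi> \<and> \<not> i + t \<le> \<pi> i) = W n q (\<lambda>\<pi>. \<pi> i + t \<le> i)"
      using t by (intro W_cong) auto
    ultimately show ?thesis by simp
  qed
  ultimately show ?thesis using up dn unfolding k_def by (simp add: distrib_left)
qed

lemma finite_perms2[simp]: "finite S \<Longrightarrow> finite {\<pi>. \<pi> permutes S}"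
  by (rule finite_permutations)

lemma Z_W: "mallows_Z n q = W n q (\<lambda>_. True)"
  by (simp add: mallows_Z_def W_def)

lemma W_pos: "0 < q \<Longrightarrow> 0 < W n q (\<lambda>_. True)"
proof -
  assume q: "0 < q"
  have "id \<in> {\<pi>. \<pi> permutes {1..n} \<and> True}" by simp
  then have "q ^ inversions n id \<le> W n q (\<lambda>_. True)"
    unfolding W_def using q by (intro member_le_sum[of id]) auto
  moreover have "0 < q ^ inversions n id" using q by simp
  ultimately show ?thesis by linarith
qed

lemma prob_W: "mallows_prob n q E = W n q E / W n q (\<lambda>_. True)"
  unfolding mallows_prob_def mallows_def W_def[of n q E] Z_W[symmetric]
  by (simp add: sum_divide_distrib)

lemma absc: "(real t \<le> \<bar>real a - real b\<bar>) = (b + t \<le> a \<or> a + t \<le> b)"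
  by (auto simp: abs_if)

lemma prob_alt: "mallows_prob n q E = (\<Sum>\<pi>\<in>{\<pi>. \<pi> permutes {1..n}}. mallows n q \<pi> * (if E \<pi> then 1 else 0))"
proof -
  have e: "{\<pi>. \<pi> permutes {1..n} \<and> E \<pi>} = {\<pi> \<in> {\<pi>. \<pi> permutes {1..n}}. E \<pi>}" by auto
  show ?thesis unfolding mallows_prob_def e
    by (subst sum.inter_filter[OF finite_permutations[OF finite_atLeastAtMost]]) (rule sum.cong, auto)
qed

lemma mallows_nonneg: "0 < q \<Longrightarrow> 0 \<le> mallows n q \<pi>"
  unfolding mallows_def Z_W using W_pos[of q n] by simp

lemma mallows_sum: "0 < q \<Longrightarrow> (\<Sum>\<pi>\<in>{\<pi>. \<pi> permutes {1..n}}. mallows n q \<pi>) = 1"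
  unfolding mallows_def Z_W using W_pos[of q n]
  by (simp add: sum_divide_distrib[symmetric] W_def)

lemma ind_sum: "(\<Sum>t\<in>{1..T}. if real t \<le> x then 1 else (0::real)) = real (min (nat \<lfloor>x\<rfloor>) T)"
  if "x \<ge> 0" for x :: real
proof -
  have "{t\<in>{1..T}. real t \<le> x} = {1..min (nat \<lfloor>x\<rfloor>) T}"
  proof (intro set_eqI iffI)
    fix t assume "t \<in> {t\<in>{1..T}. real t \<le> x}"
    then show "t \<in> {1..min (nat \<lfloor>x\<rfloor>) T}" by (auto simp: le_nat_floor)
  next
    fix t assume t: "t \<in> {1..min (nat \<lfloor>x\<rfloor>) T}"
    then have "real t \<le> real (nat \<lfloor>x\<rfloor>)" by simp
    also have "\<dots> \<le> x" using of_nat_floor[OF that] .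
    finally show "t \<in> {t\<in>{1..T}. real t \<le> x}" using t by simp
  qed
  then show ?thesis
    by (simp add: sum.inter_filter[symmetric])
qed

abbreviation "dd i \<pi> \<equiv> \<bar>real (\<pi> i) - real i\<bar>"

lemma tail_upper:
  assumes q: "0 < q" "q \<le> 1" and i: "i \<in> {1..n}"
  shows "mallows_prob n q (\<lambda>\<pi>. real t \<le> dd i \<pi>) \<le> 2 * q ^ t"
proof -
  let ?Z = "W n q (\<lambda>_. True)"
  have Z: "0 < ?Z" using W_pos q by auto
  let ?A = "\<lambda>\<pi>. i + t \<le> \<pi> i \<or> \<pi> i + t \<le> i"
  have "W n q (\<lambda>\<pi>. real t \<le> dd i \<pi>) = W n q ?A" by (rule W_cong) (simp add: absc)
  also have "\<dots> = W n q (\<lambda>\<pi>. ?A \<pi> \<and> i + t \<le> \<pi> i) + W n q (\<lambda>\<pi>. ?A \<pi> \<and> \<not> i + t \<le> \<pi> i)"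
    by (rule W_split)
  also have "\<dots> \<le> W n q (\<lambda>\<pi>. i + t \<le> \<pi> i) + W n q (\<lambda>\<pi>. \<pi> i + t \<le> i)"
    using q by (intro add_mono W_mono) auto
  also have "\<dots> \<le> q ^ t * ?Z + q ^ t * ?Z"
    by (intro add_mono W_up[OF q i] W_dn[OF q i])
  finally have "W n q (\<lambda>\<pi>. real t \<le> dd i \<pi>) \<le> 2 * q ^ t * ?Z" by simp
  then show ?thesis unfolding prob_W using Z by (simp add: divide_le_eq)
qed

lemma tail_lower:
  assumes q: "0 < q" "q \<le> 1" and i: "i \<in> {1..n}" and t: "1 \<le> t" and nk: "2 * (2 * t - 1) \<le> n"
  shows "q ^ (2*t-1) / 2 \<le> mallows_prob n q (\<lambda>\<pi>. real t \<le> dd i \<pi>)"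
proof -
  let ?Z = "W n q (\<lambda>_. True)"
  have Z: "0 < ?Z" using W_pos q by auto
  let ?A = "\<lambda>\<pi>. i + t \<le> \<pi> i \<or> \<pi> i + t \<le> i"
  have e: "W n q (\<lambda>\<pi>. real t \<le> dd i \<pi>) = W n q ?A" by (rule W_cong) (simp add: absc)
  have s: "?Z = W n q ?A + W n q (\<lambda>\<pi>. \<not> ?A \<pi>)"
    using W_split[of n q "\<lambda>_. True" ?A] by simp
  have l: "q ^ (2*t-1) * W n q (\<lambda>\<pi>. \<not> ?A \<pi>) \<le> W n q ?A" using W_low[OF q i t nk] .
  have qk: "q ^ (2*t-1) \<le> 1" using q by (simp add: power_le_one)
  have "q ^ (2*t-1) * W n q ?A \<le> W n q ?A"
    using qk W_nonneg[of q n ?A] q by (simp add: mult_left_le_one_le)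
  with l s have "q ^ (2*t-1) * ?Z \<le> 2 * W n q ?A" by (simp add: distrib_left)
  then show ?thesis unfolding prob_W e using Z by (simp add: le_divide_eq)
qed

lemma sum_tails:
  assumes q: "0 < q"
  shows "(\<Sum>t\<in>{1..T}. mallows_prob n q (\<lambda>\<pi>. real t \<le> dd i \<pi>))
    = (\<Sum>\<pi>\<in>{\<pi>. \<pi> permutes {1..n}}. mallows n q \<pi> * real (min (nat \<lfloor>dd i \<pi>\<rfloor>) T))"
proof -
  have "(\<Sum>t\<in>{1..T}. mallows_prob n q (\<lambda>\<pi>. real t \<le> dd i \<pi>))
     = (\<Sum>t\<in>{1..T}. \<Sum>\<pi>\<in>{\<pi>. \<pi> permutes {1..n}}. mallows n q \<pi> * (if real t \<le> dd i \<pi> then 1 else 0))"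
    by (simp add: prob_alt)
  also have "\<dots> = (\<Sum>\<pi>\<in>{\<pi>. \<pi> permutes {1..n}}. \<Sum>t\<in>{1..T}. mallows n q \<pi> * (if real t \<le> dd i \<pi> then 1 else 0))"
    by (rule sum.swap)
  also have "\<dots> = (\<Sum>\<pi>\<in>{\<pi>. \<pi> permutes {1..n}}. mallows n q \<pi> * real (min (nat \<lfloor>dd i \<pi>\<rfloor>) T))"
    by (rule sum.cong) (simp_all only: sum_distrib_left[symmetric] ind_sum[OF abs_ge_zero])
  finally show ?thesis .
qed

lemma dd_floor:
  assumes p: "\<pi> permutes {1..n}" and i: "i \<in> {1..n}"
  shows "real (nat \<lfloor>dd i \<pi>\<rfloor>) = dd i \<pi>" "dd i \<pi> \<le> real n - 1"
proof -
  define m where "m = (if i \<le> \<pi> i then \<pi> i - i else i - \<pi> i)"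
  have "dd i \<pi> = real m" unfolding m_def by (auto simp: of_nat_diff)
  then show "real (nat \<lfloor>dd i \<pi>\<rfloor>) = dd i \<pi>" by simp
  have "\<pi> i \<in> {1..n}" using perm_in[OF p i] .
  then show "dd i \<pi> \<le> real n - 1" using i by (auto simp: abs_if)
qed

lemma expect_upper_n:
  assumes q: "0 < q" and i: "i \<in> {1..n}"
  shows "mallows_expect n q (dd i) \<le> real n - 1"
proof -
  have "mallows_expect n q (dd i) \<le> (\<Sum>\<pi>\<in>{\<pi>. \<pi> permutes {1..n}}. mallows n q \<pi> * (real n - 1))"
    unfolding mallows_expect_def using dd_floor[OF _ i] mallows_nonneg[OF q]
    by (intro sum_mono mult_left_mono) auto
  also have "\<dots> = real n - 1" using mallows_sum[OF q] by (simp add: sum_distrib_right[symmetric])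
  finally show ?thesis .
qed

lemma expect_tails:
  assumes q: "0 < q" and i: "i \<in> {1..n}"
  shows "mallows_expect n q (dd i) = (\<Sum>t\<in>{1..n}. mallows_prob n q (\<lambda>\<pi>. real t \<le> dd i \<pi>))"
  unfolding sum_tails[OF q] mallows_expect_def
proof (rule sum.cong)
  fix \<pi> assume "\<pi> \<in> {\<pi>. \<pi> permutes {1..n}}"
  then have p: "\<pi> permutes {1..n}" by simp
  have "nat \<lfloor>dd i \<pi>\<rfloor> \<le> n" using dd_floor[OF p i] by linarith
  then show "mallows n q \<pi> * dd i \<pi> = mallows n q \<pi> * real (min (nat \<lfloor>dd i \<pi>\<rfloor>) n)"
    using dd_floor(1)[OF p i] by (simp add: min_def)
qed simp

lemma expect_ge_tails:
  assumes q: "0 < q" and i: "i \<in> {1..n}"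
  shows "(\<Sum>t\<in>{1..T}. mallows_prob n q (\<lambda>\<pi>. real t \<le> dd i \<pi>)) \<le> mallows_expect n q (dd i)"
  unfolding sum_tails[OF q] mallows_expect_def
proof (rule sum_mono)
  fix \<pi> assume "\<pi> \<in> {\<pi>. \<pi> permutes {1..n}}"
  then have p: "\<pi> permutes {1..n}" by simp
  have "real (min (nat \<lfloor>dd i \<pi>\<rfloor>) T) \<le> dd i \<pi>" using dd_floor(1)[OF p i] by linarith
  then show "mallows n q \<pi> * real (min (nat \<lfloor>dd i \<pi>\<rfloor>) T) \<le> mallows n q \<pi> * dd i \<pi>"
    using mallows_nonneg[OF q] by (intro mult_left_mono) auto
qed

lemma geom: "(\<Sum>t\<in>{1..N}. (q::real) ^ t) * (1 - q) = q - q ^ (N + 1)"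
proof (induction N)
  case (Suc N)
  have "(\<Sum>t\<in>{1..Suc N}. q ^ t) = (\<Sum>t\<in>{1..N}. q ^ t) + q ^ Suc N"
    by (simp add: sum.cl_ivl_Suc)
  then have "(\<Sum>t\<in>{1..Suc N}. q ^ t) * (1 - q) = (\<Sum>t\<in>{1..N}. q ^ t) * (1 - q) + q ^ Suc N * (1 - q)"
    by (simp add: distrib_right)
  also have "\<dots> = q - q ^ (N + 1) + q ^ Suc N * (1 - q)" by (simp only: Suc.IH)
  also have "\<dots> = q - q ^ (Suc N + 1)" by (simp add: algebra_simps)
  finally show ?case .
qed simp

lemma expect_upper_q:
  assumes q: "0 < q" "q < 1" and i: "i \<in> {1..n}"
  shows "mallows_expect n q (dd i) \<le> 2 * q / (1 - q)"
proof -
  have "mallows_expect n q (dd i) \<le> (\<Sum>t\<in>{1..n}. 2 * q ^ t)"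
    unfolding expect_tails[OF q(1) i] using q i by (intro sum_mono tail_upper) auto
  also have "\<dots> = 2 * (q - q ^ (n + 1)) / (1 - q)"
    using geom[where N=n and q=q] q by (simp add: sum_distrib_left[symmetric] eq_divide_eq)
  also have "\<dots> \<le> 2 * q / (1 - q)" using q by (intro divide_right_mono) auto
  finally show ?thesis .
qed

lemma expect_lowerT:
  assumes q: "0 < q" "q < 1" and i: "i \<in> {1..n}" and T: "1 \<le> T" "2 * (2 * T - 1) \<le> n"
  shows "real T * q ^ (2 * T) / 2 \<le> mallows_expect n q (dd i)"
proof -
  have "real T * q ^ (2 * T) / 2 = (\<Sum>t\<in>{1..T}. q ^ (2 * T) / 2)" by simp
  also have "\<dots> \<le> (\<Sum>t\<in>{1..T}. mallows_prob n q (\<lambda>\<pi>. real t \<le> dd i \<pi>))"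
  proof (rule sum_mono)
    fix t assume t: "t \<in> {1..T}"
    have "q ^ (2 * T) \<le> q ^ (2 * t - 1)" using q t by (intro power_decreasing) auto
    moreover have "q ^ (2*t-1) / 2 \<le> mallows_prob n q (\<lambda>\<pi>. real t \<le> dd i \<pi>)"
      using q t T by (intro tail_lower[OF _ _ i]) auto
    ultimately show "q ^ (2 * T) / 2 \<le> mallows_prob n q (\<lambda>\<pi>. real t \<le> dd i \<pi>)" by linarith
  qed
  also have "\<dots> \<le> mallows_expect n q (dd i)" by (rule expect_ge_tails[OF q(1) i])
  finally show ?thesis .
qed

lemma expect_lower:
  assumes q: "0 < q" "q < 1" and i: "i \<in> {1..n}"
  shows "(1/32) * min (q / (1 - q)) (real n - 1) \<le> mallows_expect n q (dd i)"
proof -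
  have E0: "0 \<le> mallows_expect n q (dd i)"
    using expect_ge_tails[OF q(1) i, of 0] by simp
  have s0: "0 < q / (1 - q)" using q by simp
  show ?thesis
  proof (cases "n = 1")
    case True
    then show ?thesis using E0 s0 by simp
  next
    case False
    then have n2: "n \<ge> 2" using i by auto
    have "q ^ (2*1-1) / 2 \<le> mallows_prob n q (\<lambda>\<pi>. real 1 \<le> dd i \<pi>)"
      using q n2 by (intro tail_lower[OF _ _ i]) auto
    moreover have "(\<Sum>t\<in>{1..1}. mallows_prob n q (\<lambda>\<pi>. real t \<le> dd i \<pi>)) \<le> mallows_expect n q (dd i)"
      by (rule expect_ge_tails[OF q(1) i])
    ultimately have E1: "q / 2 \<le> mallows_expect n q (dd i)" by simp
    show ?thesis
    proof (cases "q \<le> 3/4")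
      case True
      have "q / (1 - q) \<le> 4 * q" using True q by (simp add: divide_le_eq)
      then have "min (q / (1 - q)) (real n - 1) \<le> 4 * q" by linarith
      then have "1/32 * min (q / (1 - q)) (real n - 1) \<le> 1/32 * (4 * q)" by (rule mult_left_mono) simp
      then show ?thesis using E1 q by linarith
    next
      case False
      define x where "x = 1 / (4 * (1 - q))"
      have x1: "1 \<le> x" using False q unfolding x_def by (simp add: field_simps)
      define M where "M = nat \<lfloor>x\<rfloor>"
      have M1: "real M \<le> x" unfolding M_def using x1 by (intro of_nat_floor) auto
      have M2: "x - 1 < real M" unfolding M_def using x1 by linarith
      have M3: "1 \<le> M" unfolding M_def using x1 by linarith
      define K where "K = (n + 2) div 4"
      have K1: "1 \<le> K" "4 * K \<le> n + 2" "n + 2 < 4 * K + 4" unfolding K_def using n2 by auto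
      define T where "T = min M K"
      have T1: "1 \<le> T" "2 * (2 * T - 1) \<le> n" using M3 K1 unfolding T_def by auto
      have "2 * real T * (1 - q) \<le> 2 * x * (1 - q)"
        using q M1 unfolding T_def by (intro mult_right_mono) auto
      also have "\<dots> = 1/2" unfolding x_def using q by simp
      finally have b: "2 * real T * (1 - q) \<le> 1/2" .
      have "1 + real (2 * T) * (q - 1) \<le> (1 + (q - 1)) ^ (2 * T)"
        using q by (intro Bernoulli_inequality) auto
      then have "1/2 \<le> q ^ (2 * T)" using b by (simp add: algebra_simps)
      then have "real T * (1/2) \<le> real T * q ^ (2 * T)" by (intro mult_left_mono) auto
      then have "real T / 4 \<le> real T * q ^ (2 * T) / 2" by simp
      also have "\<dots> \<le> mallows_expect n q (dd i)" using expect_lowerT[OF q i T1] .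
      finally have ET: "real T / 4 \<le> mallows_expect n q (dd i)" .
      have "min (q / (1 - q)) (real n - 1) \<le> 8 * real T"
      proof (cases "M \<le> K")
        case True
        then have "T = M" unfolding T_def by simp
        have "q / (1 - q) \<le> 1 / (1 - q)" using q by (simp add: divide_right_mono)
        also have "\<dots> = 4 * x" unfolding x_def using q by (simp add: field_simps)
        also have "\<dots> \<le> 8 * real M" using M2 M3 by linarith
        finally show ?thesis using \<open>T = M\<close> by linarith
      next
        case False
        then have "T = K" unfolding T_def by simp
        have "real n + 2 < 4 * real K + 4" using K1(3) by linarith
        then have "real n - 1 \<le> 8 * real K" using K1 by linarith
        then show ?thesis using \<open>T = K\<close> by linarith
      qed
      then have "1/32 * min (q / (1 - q)) (real n - 1) \<le> 1/32 * (8 * real T)" by (rule mult_left_mono) simp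
      then show ?thesis using ET by linarith
    qed
  qed
qed

theorem theorem1p1:
  shows "\<exists>c>0. \<forall>(q::real) (n::nat) (i::nat).
     0 < q \<and> q < 1 \<and> 1 \<le> n \<and> 1 \<le> i \<and> i \<le> n \<longrightarrow>
       (\<forall>t::nat. t \<ge> 1 \<longrightarrow>
          mallows_prob n q (\<lambda>\<pi>. \<bar>real (\<pi> i) - real i\<bar> \<ge> real t) \<le> 2 * q ^ t)
     \<and> c * min (q / (1 - q)) (real n - 1) \<le> mallows_expect n q (\<lambda>\<pi>. \<bar>real (\<pi> i) - real i\<bar>)
     \<and> mallows_expect n q (\<lambda>\<pi>. \<bar>real (\<pi> i) - real i\<bar>) \<le> min (2 * q / (1 - q)) (real n - 1)
     \<and> (n \<ge> 3 \<longrightarrow> (\<forall>t::nat. 1 \<le> t \<and> real t \<le> (real n + 5) / 8 \<longrightarrow>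
          mallows_prob n q (\<lambda>\<pi>. \<bar>real (\<pi> i) - real i\<bar> \<ge> real t) \<ge> q ^ (2 * t - 1) / 2))"
proof (rule exI[of _ "1/32"], rule conjI)
  show "(0::real) < 1/32" by simp
  show "\<forall>(q::real) (n::nat) (i::nat).
     0 < q \<and> q < 1 \<and> 1 \<le> n \<and> 1 \<le> i \<and> i \<le> n \<longrightarrow>
       (\<forall>t::nat. t \<ge> 1 \<longrightarrow>
          mallows_prob n q (\<lambda>\<pi>. \<bar>real (\<pi> i) - real i\<bar> \<ge> real t) \<le> 2 * q ^ t)
     \<and> 1/32 * min (q / (1 - q)) (real n - 1) \<le> mallows_expect n q (\<lambda>\<pi>. \<bar>real (\<pi> i) - real i\<bar>)
     \<and> mallows_expect n q (\<lambda>\<pi>. \<bar>real (\<pi> i) - real i\<bar>) \<le> min (2 * q / (1 - q)) (real n - 1)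
     \<and> (n \<ge> 3 \<longrightarrow> (\<forall>t::nat. 1 \<le> t \<and> real t \<le> (real n + 5) / 8 \<longrightarrow>
          mallows_prob n q (\<lambda>\<pi>. \<bar>real (\<pi> i) - real i\<bar> \<ge> real t) \<ge> q ^ (2 * t - 1) / 2))"
  proof (intro allI impI)
  fix q :: real and n i :: nat
  assume h: "0 < q \<and> q < 1 \<and> 1 \<le> n \<and> 1 \<le> i \<and> i \<le> n"
  then have q: "0 < q" "q < 1" and i: "i \<in> {1..n}" by auto
  have a1: "\<forall>t::nat. t \<ge> 1 \<longrightarrow>
          mallows_prob n q (\<lambda>\<pi>. \<bar>real (\<pi> i) - real i\<bar> \<ge> real t) \<le> 2 * q ^ t"
    using tail_upper[OF q(1) _ i] q by auto
  have a2: "1/32 * min (q / (1 - q)) (real n - 1) \<le> mallows_expect n q (\<lambda>\<pi>. \<bar>real (\<pi> i) - real i\<bar>)"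
    using expect_lower[OF q i] by simp
  have a3: "mallows_expect n q (\<lambda>\<pi>. \<bar>real (\<pi> i) - real i\<bar>) \<le> min (2 * q / (1 - q)) (real n - 1)"
    using expect_upper_q[OF q i] expect_upper_n[OF q(1) i] by simp
  have a4: "n \<ge> 3 \<longrightarrow> (\<forall>t::nat. 1 \<le> t \<and> real t \<le> (real n + 5) / 8 \<longrightarrow>
          mallows_prob n q (\<lambda>\<pi>. \<bar>real (\<pi> i) - real i\<bar> \<ge> real t) \<ge> q ^ (2 * t - 1) / 2)"
  proof (intro allI impI)
    fix t :: nat assume "n \<ge> 3" and t: "1 \<le> t \<and> real t \<le> (real n + 5) / 8"
    then have "8 * real t \<le> real n + 5" by simp
    then have "8 * t \<le> n + 5" by linarith
    then have "2 * (2 * t - 1) \<le> n" using t by auto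
    then show "mallows_prob n q (\<lambda>\<pi>. \<bar>real (\<pi> i) - real i\<bar> \<ge> real t) \<ge> q ^ (2 * t - 1) / 2"
      using tail_lower[OF q(1) _ i] q t by auto
  qed
  show "(\<forall>t::nat. t \<ge> 1 \<longrightarrow>
          mallows_prob n q (\<lambda>\<pi>. \<bar>real (\<pi> i) - real i\<bar> \<ge> real t) \<le> 2 * q ^ t)
     \<and> 1/32 * min (q / (1 - q)) (real n - 1) \<le> mallows_expect n q (\<lambda>\<pi>. \<bar>real (\<pi> i) - real i\<bar>)
     \<and> mallows_expect n q (\<lambda>\<pi>. \<bar>real (\<pi> i) - real i\<bar>) \<le> min (2 * q / (1 - q)) (real n - 1)
     \<and> (n \<ge> 3 \<longrightarrow> (\<forall>t::nat. 1 \<le> t \<and> real t \<le> (real n + 5) / 8 \<longrightarrow>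
          mallows_prob n q (\<lambda>\<pi>. \<bar>real (\<pi> i) - real i\<bar> \<ge> real t) \<ge> q ^ (2 * t - 1) / 2))"
    using a1 a2 a3 a4 by blast
  qed
qed

end
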